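(* Let $F:\mathbb{R}^p\to\mathbb{R}$ be bounded from below by a constant $F_{l.b.}$, i.e. $F(x)\ge F_{l.b.}$ for all $x\in\mathbb{R}^p$, and suppose that the gradient $\dot F(x)=\nabla F(x)$ exists for every $x\in\mathbb{R}^p$ and that $\dot F$ is locally Lipschitz continuous on $\mathbb{R}^p$. Let $x_0\in\mathbb{R}^p$, let $\{M_k: k\ge 0\}\subset\mathbb{R}^{p\times p}$ be symmetric positive definite matrices, and define $x_{k+1}=x_k-M_k\dot F(x_k)$ for $k\ge 0$. Then for every $R\ge 0$ there exists a constant $C_R>0$ such that for all $k\ge 0$, $$[F(x_{k+1})-F_{l.b.}]\,\chi_{k+1}^0(R)\le \Big[F(x_k)-F_{l.b.}-\dot F(x_k)^\intercal M_k\dot F(x_k)+C_R\|M_k\dot F(x_k)\|_2^2\Big]\chi_k^0(R).$$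
   Context: For $R>0$ (or $R\ge 0$), $z\in\mathbb{R}^p$ and $k\ge 0$, $\chi_k^z(R)$ equals $1$ if $\|x_j-z\|_2\le R$ for all $0\le j\le k$, and equals $0$ otherwise. In particular $\chi_k^0(R)=1$ iff $\|x_j\|_2\le R$ for all $j\le k$. *)

theory Defs
  imports "HOL-Analysis.Analysis"
begin

definition chi :: "(nat \<Rightarrow> real ^ 'p) \<Rightarrow> nat \<Rightarrow> real ^ 'p \<Rightarrow> real \<Rightarrow> real" where
  "chi x k z R = (if (\<forall>j\<le>k. norm (x j - z) \<le> R) then 1 else 0)"

definition locally_lipschitz_on :: "'a::metric_space set \<Rightarrow> ('a \<Rightarrow> 'b::metric_space) \<Rightarrow> bool" where
  "locally_lipschitz_on S f \<longleftrightarrow>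
     (\<forall>x\<in>S. \<exists>e>0. \<exists>L. L-lipschitz_on (cball x e \<inter> S) f)"

definition sym_pos_def :: "real ^ 'n ^ 'n \<Rightarrow> bool" where
  "sym_pos_def A \<longleftrightarrow> transpose A = A \<and> (\<forall>v. v \<noteq> 0 \<longrightarrow> v \<bullet> (A *v v) > 0)"

end

theory Submission
  imports Defs
begin

lemma descent:
  fixes F :: "real ^ 'p \<Rightarrow> real" and G :: "real ^ 'p \<Rightarrow> real ^ 'p"
  assumes grad: "\<And>y. (F has_derivative (\<lambda>h. G y \<bullet> h)) (at y)"
    and L: "L-lipschitz_on S G" and S: "convex S" and y: "y \<in> S" and z: "z \<in> S"
  shows "F z \<le> F y + G y \<bullet> (z - y) + L * (norm (z - y))\<^sup>2"
proof -
  define d where "d = z - y"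
  define f where "f t = F (y + t *\<^sub>R d) - t * (G y \<bullet> d)" for t :: real
  have der: "(f has_derivative (\<lambda>h. h * ((G (y + t *\<^sub>R d) - G y) \<bullet> d))) (at t within {0..1})" for t
  proof -
    have "((\<lambda>t. y + t *\<^sub>R d) has_derivative (\<lambda>h. h *\<^sub>R d)) (at t within {0..1})"
      by (auto intro!: derivative_eq_intros)
    from has_derivative_in_compose[OF this has_derivative_at_withinI[OF grad]]
    have "((\<lambda>t. F (y + t *\<^sub>R d)) has_derivative (\<lambda>h. G (y + t *\<^sub>R d) \<bullet> (h *\<^sub>R d))) (at t within {0..1})"
      by (simp add: o_def)
    then have "(f has_derivative (\<lambda>h. G (y + t *\<^sub>R d) \<bullet> (h *\<^sub>R d) - h * (G y \<bullet> d))) (at t within {0..1})"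
      unfolding f_def by (auto intro!: derivative_eq_intros)
    then show ?thesis by (simp add: algebra_simps inner_diff_left)
  qed
  obtain u where u: "u \<in> {0..1}" and eq: "f 1 - f 0 = 1 * ((G (y + u *\<^sub>R d) - G y) \<bullet> d)"
    using mvt_very_simple[of 0 1 f, OF _ der] by auto
  have yu: "y + u *\<^sub>R d \<in> S"
  proof -
    have "y + u *\<^sub>R d = (1 - u) *\<^sub>R y + u *\<^sub>R z" by (simp add: d_def algebra_simps)
    then show ?thesis using S y z u by (simp add: convex_alt)
  qed
  have "(G (y + u *\<^sub>R d) - G y) \<bullet> d \<le> norm (G (y + u *\<^sub>R d) - G y) * norm d"
    by (rule norm_cauchy_schwarz)
  also have "norm (G (y + u *\<^sub>R d) - G y) \<le> L * norm (u *\<^sub>R d)"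
    using lipschitz_onD[OF L yu y] by (simp add: dist_norm)
  also have "L * norm (u *\<^sub>R d) \<le> L * norm d"
    using u lipschitz_on_nonneg[OF L] by (auto intro!: mult_left_mono mult_left_le_one_le)
  finally have "(G (y + u *\<^sub>R d) - G y) \<bullet> d \<le> L * norm d * norm d"
    by (simp add: mult_right_mono)
  then show ?thesis using eq unfolding f_def d_def by (simp add: power2_eq_square algebra_simps)
qed


lemma lip_ball:
  fixes G :: "real ^ 'p \<Rightarrow> real ^ 'p"
  assumes lip: "locally_lipschitz_on UNIV G"
  obtains L where "L-lipschitz_on (cball 0 r) G"
proof -
  have ll: "local_lipschitz {0::real} (cball 0 r) (\<lambda>_. G)"
  proof (rule local_lipschitzI)
    fix t x assume "t \<in> {0::real}" "x \<in> cball (0::real^'p) r"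
    from lip have "\<exists>e>0. \<exists>L. L-lipschitz_on (cball x e) G"
      unfolding locally_lipschitz_on_def by simp
    then obtain e L where "e > 0" "L-lipschitz_on (cball x e) G" by blast
    have "L-lipschitz_on (cball x e \<inter> cball 0 r) G"
      by (rule lipschitz_on_subset[OF \<open>L-lipschitz_on (cball x e) G\<close>]) auto
    then show "\<exists>u>0. \<exists>L. \<forall>t\<in>cball t u \<inter> {0}. L-lipschitz_on (cball x u \<inter> cball 0 r) G"
      using \<open>e > 0\<close> by blast
  qed
  obtain L where "\<And>t. t \<in> {0::real} \<Longrightarrow> L-lipschitz_on (cball 0 r) G"
    using local_lipschitz_compact_implies_lipschitz[OF ll compact_cball compact_sing] by auto
  then show ?thesis using that by blast
qed

theorem lemma3p1:
  fixes F :: "real ^ 'p \<Rightarrow> real"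
    and G :: "real ^ 'p \<Rightarrow> real ^ 'p"
    and Flb :: real
    and M :: "nat \<Rightarrow> real ^ 'p ^ 'p"
    and x :: "nat \<Rightarrow> real ^ 'p"
  assumes lb: "\<And>y. F y \<ge> Flb"
    and grad: "\<And>y. (F has_derivative (\<lambda>h. G y \<bullet> h)) (at y)"
    and lip: "locally_lipschitz_on UNIV G"
    and M_spd: "\<And>k. sym_pos_def (M k)"
    and iter: "\<And>k. x (Suc k) = x k - M k *v G (x k)"
  shows "\<forall>R\<ge>0. \<exists>C>0. \<forall>k.
           (F (x (Suc k)) - Flb) * chi x (Suc k) 0 R
           \<le> (F (x k) - Flb - G (x k) \<bullet> (M k *v G (x k))
               + C * (norm (M k *v G (x k)))\<^sup>2) * chi x k 0 R"
proof (intro allI impI)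
  fix R :: real assume R: "R \<ge> 0"
  define S where "S = cball (0::real^'p) (R + 1)"
  obtain L0 where L0: "L0-lipschitz_on S G" using lip_ball[OF lip] unfolding S_def by blast
  define L where "L = max L0 0"
  have L: "L-lipschitz_on S G" unfolding L_def by (rule lipschitz_on_le[OF L0]) simp
  have L_nn: "L \<ge> 0" unfolding L_def by simp
  have cS: "convex S" unfolding S_def by simp
  define B where "B = norm (G 0) + L * R + 1"
  have B_pos: "B > 0" unfolding B_def using L_nn R
    by (simp add: add_nonneg_pos mult_nonneg_nonneg)
  have Gb: "norm (G y) \<le> B" if y: "norm y \<le> R" for y
  proof -
    have "dist (G y) (G 0) \<le> L * dist y 0"
      by (rule lipschitz_onD[OF L]) (use y R in \<open>auto simp: S_def\<close>)
    then have "norm (G y - G 0) \<le> L * R"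
      using y L_nn by (simp add: dist_norm) (meson mult_left_mono order_trans)
    then show ?thesis unfolding B_def using norm_triangle_sub[of "G y" "G 0"] by linarith
  qed
  define t where "t = 1 / (2 * L + B)"
  have t_pos: "t > 0" unfolding t_def using L_nn B_pos by simp
  have tB: "t * B \<le> 1" and tL: "2 * L * t \<le> 1"
    unfolding t_def using L_nn B_pos by (auto simp: field_simps)
  have lowb: "t / 2 * (norm (G y))\<^sup>2 \<le> F y - Flb" if y: "norm y \<le> R" for y
  proof -
    have yS: "y \<in> S" using y by (simp add: S_def)
    have "norm (t *\<^sub>R G y) \<le> 1"
      using Gb[OF y] t_pos tB by (simp add: order_trans[OF mult_left_mono])
    then have zS: "y - t *\<^sub>R G y \<in> S" using y norm_triangle_ineq4[of y "t *\<^sub>R G y"]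
      by (simp add: S_def)
    have "F (y - t *\<^sub>R G y) \<le> F y + G y \<bullet> ((y - t *\<^sub>R G y) - y) + L * (norm ((y - t *\<^sub>R G y) - y))\<^sup>2"
      by (rule descent[OF grad L cS yS zS])
    also have "\<dots> = F y - t * (norm (G y))\<^sup>2 + (L * t) * t * (norm (G y))\<^sup>2"
      using t_pos by (simp add: dot_square_norm power_mult_distrib power2_eq_square algebra_simps)
    also have "(L * t) * t * (norm (G y))\<^sup>2 \<le> (1/2) * t * (norm (G y))\<^sup>2"
      using tL t_pos by (intro mult_right_mono) auto
    finally show ?thesis using lb[of "y - t *\<^sub>R G y"] by simp
  qed
  define C where "C = L + 1 / (2 * t) + 1"
  have "1 / (2 * t) > 0" using t_pos by simp
  then have C_pos: "C > 0" unfolding C_def using L_nn by linarith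
  show "\<exists>C>0. \<forall>k. (F (x (Suc k)) - Flb) * chi x (Suc k) 0 R
           \<le> (F (x k) - Flb - G (x k) \<bullet> (M k *v G (x k))
               + C * (norm (M k *v G (x k)))\<^sup>2) * chi x k 0 R"
  proof (intro exI[of _ C] conjI allI C_pos)
    fix k
    define g where "g = G (x k)"
    define v where "v = M k *v G (x k)"
    have key: "0 \<le> F (x k) - Flb - g \<bullet> v + C * (norm v)\<^sup>2" if xk: "norm (x k) \<le> R"
    proof -
      have "g \<bullet> v \<le> norm g * norm v" by (rule norm_cauchy_schwarz)
      also have "norm g * norm v \<le> t / 2 * (norm g)\<^sup>2 + 1 / (2 * t) * (norm v)\<^sup>2"
      proof -
        have "0 \<le> (t * norm g - norm v)\<^sup>2" by simp
        then have "2 * t * (norm g * norm v) \<le> t\<^sup>2 * (norm g)\<^sup>2 + (norm v)\<^sup>2"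
          by (simp add: power2_eq_square algebra_simps)
        then show ?thesis using t_pos by (simp add: field_simps power2_eq_square)
      qed
      finally have "g \<bullet> v \<le> t / 2 * (norm g)\<^sup>2 + 1 / (2 * t) * (norm v)\<^sup>2" .
      moreover have "t / 2 * (norm g)\<^sup>2 \<le> F (x k) - Flb" unfolding g_def by (rule lowb[OF xk])
      moreover have "1 / (2 * t) * (norm v)\<^sup>2 \<le> C * (norm v)\<^sup>2"
        unfolding C_def using L_nn by (intro mult_right_mono) auto
      ultimately show ?thesis by linarith
    qed
    show "(F (x (Suc k)) - Flb) * chi x (Suc k) 0 R
           \<le> (F (x k) - Flb - G (x k) \<bullet> (M k *v G (x k))
               + C * (norm (M k *v G (x k)))\<^sup>2) * chi x k 0 R"
    proof (cases "\<forall>j\<le>Suc k. norm (x j - 0) \<le> R")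
      case True
      then have c1: "chi x (Suc k) 0 R = 1" and c0: "chi x k 0 R = 1"
        by (auto simp: chi_def)
      have "norm (x k) \<le> R" "norm (x (Suc k)) \<le> R" using True by auto
      then have xk: "x k \<in> S" and xk1: "x (Suc k) \<in> S" by (auto simp: S_def)
      have "F (x (Suc k)) \<le> F (x k) + g \<bullet> (x (Suc k) - x k) + L * (norm (x (Suc k) - x k))\<^sup>2"
        unfolding g_def by (rule descent[OF grad L cS xk xk1])
      also have "\<dots> = F (x k) - g \<bullet> v + L * (norm v)\<^sup>2"
        by (simp add: iter v_def)
      also have "L * (norm v)\<^sup>2 \<le> C * (norm v)\<^sup>2"
        unfolding C_def using t_pos by (intro mult_right_mono) auto
      finally show ?thesis using c1 c0 by (simp add: g_def v_def)
    next
      case False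
      then have c1: "chi x (Suc k) 0 R = 0" by (simp add: chi_def)
      show ?thesis
      proof (cases "\<forall>j\<le>k. norm (x j - 0) \<le> R")
        case True
        then have "chi x k 0 R = 1" by (simp add: chi_def)
        moreover have "norm (x k) \<le> R" using True by auto
        ultimately show ?thesis using c1 key by (simp add: g_def v_def)
      next
        case False
        then have "chi x k 0 R = 0" by (simp add: chi_def)
        then show ?thesis using c1 by simp
      qed
    qed
  qed
qed

end
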